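(* Let $(g,p)$ be any mechanism and let $(v,x,y)$ be a random triple whose law is both bidder-symmetric and item-symmetric. Then $$\mathbb E\Big[\sum_{i=1}^n[\mathcal Q_3 p]_i(v,x,y)\Big]=\mathbb E\Big[\sum_{i=1}^n p_i(v,x,y)\Big]$$ and $$\mathbb E\Big[\sum_{i=1}^n reg_i(v,x,y)\Big]-\mathbb E\Big[\sum_{i=1}^n[\mathcal Q_3\, reg]_i(v,x,y)\Big]=\mathbb E\big[\Delta_3(g,p;v,x,y)\big]\ge0 .$$
   Context: Setup: $n$ bidders, $m$ items, bidder contexts $x=(x_1,\dots,x_n)\in\mathcal X^n$, item contexts $y=(y_1,\dots,y_m)\in\mathcal Y^m$, valuation/bid matrix $v=(v_{ij})\in\mathcal V^{n\times m}$ with $\mathcal V\subseteq\mathbb R_{\ge0}$; $v_i$ is row $i$ and $(v_i',v_{-i})$ is $v$ with row $i$ replaced by $v_i'$. A mechanism is $(g,p)$ with $g:\mathcal V^{n\times m}\times\mathcal X^n\times\mathcal Y^m\to\mathbb R^{n\times m}$ and $p:\mathcal V^{n\times m}\times\mathcal X^n\times\mathcal Y^m\to\mathbb R^{n}$ (column vector). Utility: $u_i(v_i,b,x,y)=\sum_j g_{ij}(b,x,y)v_{ij}-p_i(b,x,y)$; ex-post regret: $reg_i(v,x,y)=\max_{b_i'\in\mathcal V^m}u_i(v_i,(b_i',v_{-i}),x,y)-u_i(v_i,v,x,y)$. For a permutation matrix $\sigma_n\in S_n$, $\sigma_nv$ permutes rows, $\sigma_nx$ permutes bidder contexts, $\sigma_np$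 permutes entries of $p$; for $\sigma_m\in S_m$, $v\sigma_m$ permutes columns and $y\sigma_m$ permutes item contexts. Bidder-item aggregated averaging: $\mathcal Q_3 g(v,x,y)=\frac1{n!m!}\sum_{\sigma_n\in S_n}\sum_{\sigma_m\in S_m}\sigma_n^{-1}g(\sigma_nv\sigma_m,\sigma_nx,y\sigma_m)\sigma_m^{-1}$, $\mathcal Q_3 p(v,x,y)=\frac1{n!m!}\sum_{\sigma_n}\sum_{\sigma_m}\sigma_n^{-1}p(\sigma_nv\sigma_m,\sigma_nx,y\sigma_m)$. $\mathcal Q_3u$ and $\mathcal Q_3\,reg$ are the utility and ex-post regret induced by $(\mathcal Q_3g,\mathcal Q_3p)$. Regret gap: $\Delta_3(g,p;v,x,y)=\max_{v'\in\mathcal V^{n\times m}}\sum_{i}u_i(v_i,(v_i',v_{-i}),x,y)-\max_{v'\in\mathcal V^{n\times m}}\sum_{i}[\mathcal Q_3u]_i(v_i,(v_i',v_{-i}),x,y)$. The law of $(v,x,y)$ is bidder-symmetric if $(\sigma_nv,\sigma_nx,y)$ has the same law as $(v,x,y)$ for all $\sigma_n\in S_n$, and item-symmetric if $(v\sigma_m,x,y\sigma_m)$ has the same law as $(v,x,y)$ for all $\sigma_m\in S_m$. All maxima are assumed attained and all functions measurable with finite expectations. *)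

theory Defs
  imports "HOL-Analysis.Analysis" "HOL-Probability.Probability"
begin

text \<open>Bidders are indexed by a finite type 'n, items by a finite type 'm.
  A valuation/bid matrix is a function 'n => 'm => real (row i = bidder i).
  Bidder contexts: 'n => 'x; item contexts: 'm => 'y.\<close>

definition Vvec :: "real set \<Rightarrow> ('m \<Rightarrow> real) set" where
  "Vvec V = {b. \<forall>j. b j \<in> V}"

definition Vmat :: "real set \<Rightarrow> ('n \<Rightarrow> 'm \<Rightarrow> real) set" where
  "Vmat V = {v. \<forall>i j. v i j \<in> V}"

definition rowperm :: "('n \<Rightarrow> 'n) \<Rightarrow> ('n \<Rightarrow> 'a) \<Rightarrow> ('n \<Rightarrow> 'a)" where
  "rowperm \<pi> v = (\<lambda>i. v (\<pi> i))"

definition colperm :: "('m \<Rightarrow> 'm) \<Rightarrow> ('n \<Rightarrow> 'm \<Rightarrow> 'a) \<Rightarrow> ('n \<Rightarrow> 'm \<Rightarrow> 'a)" where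
  "colperm \<tau> v = (\<lambda>i j. v i (\<tau> j))"

definition Q3g ::
  "(('n::finite \<Rightarrow> 'm::finite \<Rightarrow> real) \<Rightarrow> ('n \<Rightarrow> 'x) \<Rightarrow> ('m \<Rightarrow> 'y) \<Rightarrow> 'n \<Rightarrow> 'm \<Rightarrow> real)
   \<Rightarrow> ('n \<Rightarrow> 'm \<Rightarrow> real) \<Rightarrow> ('n \<Rightarrow> 'x) \<Rightarrow> ('m \<Rightarrow> 'y) \<Rightarrow> 'n \<Rightarrow> 'm \<Rightarrow> real" where
  "Q3g g v x y i j =
     (\<Sum>\<pi>\<in>{\<pi>. \<pi> permutes (UNIV::'n set)}. \<Sum>\<tau>\<in>{\<tau>. \<tau> permutes (UNIV::'m set)}.
        g (colperm \<tau> (rowperm \<pi> v)) (rowperm \<pi> x) (\<lambda>j. y (\<tau> j)) (inv \<pi> i) (inv \<tau> j))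
     / (fact CARD('n) * fact CARD('m))"

definition Q3p ::
  "(('n::finite \<Rightarrow> 'm::finite \<Rightarrow> real) \<Rightarrow> ('n \<Rightarrow> 'x) \<Rightarrow> ('m \<Rightarrow> 'y) \<Rightarrow> 'n \<Rightarrow> real)
   \<Rightarrow> ('n \<Rightarrow> 'm \<Rightarrow> real) \<Rightarrow> ('n \<Rightarrow> 'x) \<Rightarrow> ('m \<Rightarrow> 'y) \<Rightarrow> 'n \<Rightarrow> real" where
  "Q3p p v x y i =
     (\<Sum>\<pi>\<in>{\<pi>. \<pi> permutes (UNIV::'n set)}. \<Sum>\<tau>\<in>{\<tau>. \<tau> permutes (UNIV::'m set)}.
        p (colperm \<tau> (rowperm \<pi> v)) (rowperm \<pi> x) (\<lambda>j. y (\<tau> j)) (inv \<pi> i))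
     / (fact CARD('n) * fact CARD('m))"

definition util ::
  "(('n \<Rightarrow> 'm::finite \<Rightarrow> real) \<Rightarrow> ('n \<Rightarrow> 'x) \<Rightarrow> ('m \<Rightarrow> 'y) \<Rightarrow> 'n \<Rightarrow> 'm \<Rightarrow> real)
   \<Rightarrow> (('n \<Rightarrow> 'm \<Rightarrow> real) \<Rightarrow> ('n \<Rightarrow> 'x) \<Rightarrow> ('m \<Rightarrow> 'y) \<Rightarrow> 'n \<Rightarrow> real)
   \<Rightarrow> ('m \<Rightarrow> real) \<Rightarrow> ('n \<Rightarrow> 'm \<Rightarrow> real) \<Rightarrow> ('n \<Rightarrow> 'x) \<Rightarrow> ('m \<Rightarrow> 'y) \<Rightarrow> 'n \<Rightarrow> real" where
  "util g p vi b x y i = (\<Sum>j\<in>UNIV. g b x y i j * vi j) - p b x y i"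

text \<open>Ex-post regret (the maximum is written as a supremum; attainment is assumed separately).\<close>
definition regret ::
  "real set
   \<Rightarrow> (('n \<Rightarrow> 'm::finite \<Rightarrow> real) \<Rightarrow> ('n \<Rightarrow> 'x) \<Rightarrow> ('m \<Rightarrow> 'y) \<Rightarrow> 'n \<Rightarrow> 'm \<Rightarrow> real)
   \<Rightarrow> (('n \<Rightarrow> 'm \<Rightarrow> real) \<Rightarrow> ('n \<Rightarrow> 'x) \<Rightarrow> ('m \<Rightarrow> 'y) \<Rightarrow> 'n \<Rightarrow> real)
   \<Rightarrow> ('n \<Rightarrow> 'm \<Rightarrow> real) \<Rightarrow> ('n \<Rightarrow> 'x) \<Rightarrow> ('m \<Rightarrow> 'y) \<Rightarrow> 'n \<Rightarrow> real" where
  "regret V g p v x y i =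
     (SUP b' \<in> Vvec V. util g p (v i) (v(i := b')) x y i) - util g p (v i) v x y i"

definition Delta3 ::
  "real set
   \<Rightarrow> (('n::finite \<Rightarrow> 'm::finite \<Rightarrow> real) \<Rightarrow> ('n \<Rightarrow> 'x) \<Rightarrow> ('m \<Rightarrow> 'y) \<Rightarrow> 'n \<Rightarrow> 'm \<Rightarrow> real)
   \<Rightarrow> (('n \<Rightarrow> 'm \<Rightarrow> real) \<Rightarrow> ('n \<Rightarrow> 'x) \<Rightarrow> ('m \<Rightarrow> 'y) \<Rightarrow> 'n \<Rightarrow> real)
   \<Rightarrow> ('n \<Rightarrow> 'm \<Rightarrow> real) \<Rightarrow> ('n \<Rightarrow> 'x) \<Rightarrow> ('m \<Rightarrow> 'y) \<Rightarrow> real" where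
  "Delta3 V g p v x y =
     (SUP v' \<in> Vmat V. \<Sum>i\<in>UNIV. util g p (v i) (v(i := v' i)) x y i)
   - (SUP v' \<in> Vmat V. \<Sum>i\<in>UNIV. util (Q3g g) (Q3p p) (v i) (v(i := v' i)) x y i)"

end

theory Submission imports Defs begin

abbreviation "PN \<equiv> {\<pi>::'n::finite\<Rightarrow>'n. \<pi> permutes UNIV}"

lemma reidx:
  fixes h :: "'a::finite \<Rightarrow> real"
  assumes "\<pi> permutes UNIV"
  shows "(\<Sum>i\<in>UNIV. h (inv \<pi> i)) = (\<Sum>i\<in>UNIV. h i)"
    and "(\<Sum>i\<in>UNIV. h (\<pi> i)) = (\<Sum>i\<in>UNIV. h i)"
proof -
  show "(\<Sum>i\<in>UNIV. h (\<pi> i)) = (\<Sum>i\<in>UNIV. h i)"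
    using sum.reindex_bij_betw[OF permutes_imp_bij[OF assms], of h] .
  show "(\<Sum>i\<in>UNIV. h (inv \<pi> i)) = (\<Sum>i\<in>UNIV. h i)"
    using sum.reindex_bij_betw[OF permutes_imp_bij[OF permutes_inv[OF assms]], of h] .
qed

lemma swap3: "(\<Sum>i\<in>I. \<Sum>a\<in>A. \<Sum>b\<in>B. f i a b) = (\<Sum>a\<in>A. \<Sum>b\<in>B. \<Sum>i\<in>I. f i a b)"
proof -
  have "(\<Sum>i\<in>I. \<Sum>a\<in>A. \<Sum>b\<in>B. f i a b) = (\<Sum>a\<in>A. \<Sum>i\<in>I. \<Sum>b\<in>B. f i a b)"
    by (rule sum.swap)
  also have "\<dots> = (\<Sum>a\<in>A. \<Sum>b\<in>B. \<Sum>i\<in>I. f i a b)"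
    by (rule sum.cong[OF refl], rule sum.swap)
  finally show ?thesis .
qed

lemma sum_Q3p:
  "(\<Sum>i\<in>UNIV. Q3p p v x y i) = (\<Sum>\<pi>\<in>{\<pi>. \<pi> permutes (UNIV::'n::finite set)}. \<Sum>\<tau>\<in>{\<tau>. \<tau> permutes (UNIV::'m::finite set)}.
        \<Sum>i\<in>UNIV. p (colperm \<tau> (rowperm \<pi> v)) (rowperm \<pi> x) (\<lambda>j. y (\<tau> j)) i)
     / (fact CARD('n) * fact CARD('m))"
  unfolding Q3p_def sum_divide_distrib[symmetric]
  apply (subst swap3)
  apply (rule arg_cong[where f="\<lambda>t. t / _"])
  apply (rule sum.cong[OF refl])
  apply (rule sum.cong[OF refl])
  apply (rule reidx(1)) by simp

lemma util_Q3:
  fixes g :: "('n::finite \<Rightarrow> 'm::finite \<Rightarrow> real) \<Rightarrow> ('n \<Rightarrow> 'x) \<Rightarrow> ('m \<Rightarrow> 'y) \<Rightarrow> 'n \<Rightarrow> 'm \<Rightarrow> real"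
  shows "util (Q3g g) (Q3p p) vi b x y i =
    (\<Sum>\<pi>\<in>{\<pi>. \<pi> permutes (UNIV::'n set)}. \<Sum>\<tau>\<in>{\<tau>. \<tau> permutes (UNIV::'m set)}.
      util g p (\<lambda>j. vi (\<tau> j)) (colperm \<tau> (rowperm \<pi> b)) (rowperm \<pi> x) (\<lambda>j. y (\<tau> j)) (inv \<pi> i))
     / (fact CARD('n) * fact CARD('m))"
proof -
  have "(\<Sum>j\<in>UNIV. Q3g g b x y i j * vi j) =
     (\<Sum>\<pi>\<in>{\<pi>. \<pi> permutes (UNIV::'n set)}. \<Sum>\<tau>\<in>{\<tau>. \<tau> permutes (UNIV::'m set)}.
       \<Sum>j\<in>UNIV. g (colperm \<tau> (rowperm \<pi> b)) (rowperm \<pi> x) (\<lambda>j. y (\<tau> j)) (inv \<pi> i) j * vi (\<tau> j))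
     / (fact CARD('n) * fact CARD('m))"
    unfolding Q3g_def sum_divide_distrib[symmetric] times_divide_eq_left sum_distrib_right
    apply (subst swap3)
    apply (rule arg_cong[where f="\<lambda>t. t / _"])
    apply (rule sum.cong[OF refl])
    apply (rule sum.cong[OF refl])
    subgoal for \<pi> \<tau>
      using reidx(2)[of \<tau> "\<lambda>j. g (colperm \<tau> (rowperm \<pi> b)) (rowperm \<pi> x) (\<lambda>j. y (\<tau> j)) (inv \<pi> i) (inv \<tau> j) * vi j"]
      by (simp add: permutes_inverses)
    done
  thus ?thesis
    unfolding util_def Q3p_def
    by (simp add: diff_divide_distrib[symmetric] sum_subtractf[symmetric])
qed

lemma upd_T:
  assumes "\<pi> permutes (UNIV::'n set)"
  shows "colperm \<tau> (rowperm \<pi> (v(i:=b))) = (colperm \<tau> (rowperm \<pi> v))(inv \<pi> i := (\<lambda>j. b (\<tau> j)))"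
    and "(\<lambda>j. v i (\<tau> j)) = colperm \<tau> (rowperm \<pi> v) (inv \<pi> i)"
  using assms unfolding colperm_def rowperm_def
  by (auto simp: fun_eq_iff permutes_inverses)

lemma U_Q3:
  fixes g :: "('n::finite \<Rightarrow> 'm::finite \<Rightarrow> real) \<Rightarrow> ('n \<Rightarrow> 'x) \<Rightarrow> ('m \<Rightarrow> 'y) \<Rightarrow> 'n \<Rightarrow> 'm \<Rightarrow> real"
  shows "(\<Sum>i\<in>UNIV. util (Q3g g) (Q3p p) (v i) v x y i) =
    (\<Sum>\<pi>\<in>{\<pi>. \<pi> permutes (UNIV::'n set)}. \<Sum>\<tau>\<in>{\<tau>. \<tau> permutes (UNIV::'m set)}.
      \<Sum>k\<in>UNIV. util g p (colperm \<tau> (rowperm \<pi> v) k) (colperm \<tau> (rowperm \<pi> v)) (rowperm \<pi> x) (\<lambda>j. y (\<tau> j)) k)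
     / (fact CARD('n) * fact CARD('m))"
  unfolding util_Q3 sum_divide_distrib[symmetric]
  apply (subst swap3)
  apply (rule arg_cong[where f="\<lambda>t. t / _"])
  apply (rule sum.cong[OF refl])
  apply (rule sum.cong[OF refl])
  subgoal for \<pi> \<tau>
    using reidx(1)[of \<pi> "\<lambda>k. util g p (colperm \<tau> (rowperm \<pi> v) k) (colperm \<tau> (rowperm \<pi> v)) (rowperm \<pi> x) (\<lambda>j. y (\<tau> j)) k"]
    by (simp add: upd_T(2))
  done

lemma sep:
  fixes f :: "'n::finite \<Rightarrow> ('m \<Rightarrow> real) \<Rightarrow> real"
  assumes "\<And>i. \<exists>b\<in>Vvec V. \<forall>b'\<in>Vvec V. f i b' \<le> f i b"
  shows "(SUP v'\<in>Vmat V. \<Sum>i\<in>UNIV. f i (v' i)) = (\<Sum>i\<in>UNIV. SUP b'\<in>Vvec V. f i b')"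
proof -
  from assms obtain B where B: "\<And>i. B i \<in> Vvec V" "\<And>i b'. b' \<in> Vvec V \<Longrightarrow> f i b' \<le> f i (B i)"
    by metis
  have 1: "(SUP b'\<in>Vvec V. f i b') = f i (B i)" for i
    by (rule cSup_eq_maximum) (use B in auto)
  have "B \<in> Vmat V" using B(1) by (auto simp: Vmat_def Vvec_def)
  have 2: "(SUP v'\<in>Vmat V. \<Sum>i\<in>UNIV. f i (v' i)) = (\<Sum>i\<in>UNIV. f i (B i))"
  proof (rule cSup_eq_maximum)
    show "(\<Sum>i\<in>UNIV. f i (B i)) \<in> (\<lambda>v'. \<Sum>i\<in>UNIV. f i (v' i)) ` Vmat V"
      using \<open>B \<in> Vmat V\<close> by blast
    fix z assume "z \<in> (\<lambda>v'. \<Sum>i\<in>UNIV. f i (v' i)) ` Vmat V"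
    then obtain v' where v': "v' \<in> Vmat V" "z = (\<Sum>i\<in>UNIV. f i (v' i))" by blast
    have "v' i \<in> Vvec V" for i using v'(1) by (auto simp: Vmat_def Vvec_def)
    then show "z \<le> (\<Sum>i\<in>UNIV. f i (B i))" unfolding v'(2)
      by (intro sum_mono B(2))
  qed
  show ?thesis unfolding 2 1 ..
qed

lemma MQ_bound:
  fixes g :: "('n::finite \<Rightarrow> 'm::finite \<Rightarrow> real) \<Rightarrow> ('n \<Rightarrow> 'x) \<Rightarrow> ('m \<Rightarrow> 'y) \<Rightarrow> 'n \<Rightarrow> 'm \<Rightarrow> real"
  assumes ne: "Vvec V \<noteq> ({}::('m \<Rightarrow> real) set)"
    and bdd: "\<And>\<pi> \<tau> k. \<pi> permutes (UNIV::'n set) \<Longrightarrow> \<tau> permutes (UNIV::'m set) \<Longrightarrow>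
      bdd_above ((\<lambda>b. util g p (colperm \<tau> (rowperm \<pi> v) k) ((colperm \<tau> (rowperm \<pi> v))(k:=b)) (rowperm \<pi> x) (\<lambda>j. y (\<tau> j)) k) ` Vvec V)"
  shows "(\<Sum>i\<in>UNIV. SUP b\<in>Vvec V. util (Q3g g) (Q3p p) (v i) (v(i:=b)) x y i) \<le>
    (\<Sum>\<pi>\<in>{\<pi>. \<pi> permutes (UNIV::'n set)}. \<Sum>\<tau>\<in>{\<tau>. \<tau> permutes (UNIV::'m set)}.
      \<Sum>k\<in>UNIV. SUP b\<in>Vvec V. util g p (colperm \<tau> (rowperm \<pi> v) k) ((colperm \<tau> (rowperm \<pi> v))(k:=b)) (rowperm \<pi> x) (\<lambda>j. y (\<tau> j)) k)
     / (fact CARD('n) * fact CARD('m))"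
proof -
  define S where "S \<pi> \<tau> k = (SUP b\<in>Vvec V. util g p (colperm \<tau> (rowperm \<pi> v) k) ((colperm \<tau> (rowperm \<pi> v))(k:=b)) (rowperm \<pi> x) (\<lambda>j. y (\<tau> j)) k)"
    for \<pi> :: "'n \<Rightarrow> 'n" and \<tau> :: "'m \<Rightarrow> 'm" and k
  have step: "(SUP b\<in>Vvec V. util (Q3g g) (Q3p p) (v i) (v(i:=b)) x y i) \<le>
     (\<Sum>\<pi>\<in>{\<pi>. \<pi> permutes (UNIV::'n set)}. \<Sum>\<tau>\<in>{\<tau>. \<tau> permutes (UNIV::'m set)}. S \<pi> \<tau> (inv \<pi> i))
     / (fact CARD('n) * fact CARD('m))" for i
  proof (rule cSUP_least[of "Vvec V" "\<lambda>b. util (Q3g g) (Q3p p) (v i) (v(i:=b)) x y i", OF ne])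
    fix b :: "'m \<Rightarrow> real" assume b: "b \<in> Vvec V"
    show "util (Q3g g) (Q3p p) (v i) (v(i:=b)) x y i \<le> (\<Sum>\<pi>\<in>{\<pi>. \<pi> permutes (UNIV::'n set)}. \<Sum>\<tau>\<in>{\<tau>. \<tau> permutes (UNIV::'m set)}. S \<pi> \<tau> (inv \<pi> i))
     / (fact CARD('n) * fact CARD('m))"
      unfolding util_Q3
    proof (intro divide_right_mono sum_mono)
      fix \<pi> \<tau> assume \<pi>: "\<pi> \<in> {\<pi>. \<pi> permutes (UNIV::'n set)}" and \<tau>: "\<tau> \<in> {\<tau>. \<tau> permutes (UNIV::'m set)}"
      have bt: "(\<lambda>j. b (\<tau> j)) \<in> Vvec V" using b by (auto simp: Vvec_def)
      show "util g p (\<lambda>j. v i (\<tau> j)) (colperm \<tau> (rowperm \<pi> (v(i := b)))) (rowperm \<pi> x) (\<lambda>j. y (\<tau> j)) (inv \<pi> i) \<le> S \<pi> \<tau> (inv \<pi> i)"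
        unfolding S_def upd_T(1)[OF \<pi>[simplified]] upd_T(2)[OF \<pi>[simplified]]
        by (rule cSUP_upper[OF bt bdd]) (use \<pi> \<tau> in auto)
    qed simp
  qed
  have "(\<Sum>i\<in>UNIV. SUP b\<in>Vvec V. util (Q3g g) (Q3p p) (v i) (v(i:=b)) x y i) \<le>
     (\<Sum>i\<in>UNIV. (\<Sum>\<pi>\<in>{\<pi>. \<pi> permutes (UNIV::'n set)}. \<Sum>\<tau>\<in>{\<tau>. \<tau> permutes (UNIV::'m set)}. S \<pi> \<tau> (inv \<pi> i))
     / (fact CARD('n) * fact CARD('m)))"
    by (rule sum_mono, rule step)
  also have "\<dots> = (\<Sum>\<pi>\<in>{\<pi>. \<pi> permutes (UNIV::'n set)}. \<Sum>\<tau>\<in>{\<tau>. \<tau> permutes (UNIV::'m set)}. \<Sum>k\<in>UNIV. S \<pi> \<tau> k)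
     / (fact CARD('n) * fact CARD('m))"
    unfolding sum_divide_distrib[symmetric]
    apply (subst swap3)
    apply (rule arg_cong[where f="\<lambda>t. t / _"])
    apply (rule sum.cong[OF refl])
    apply (rule sum.cong[OF refl])
    apply (rule reidx(1)) by simp
  finally show ?thesis unfolding S_def .
qed

lemma avg_int:
  fixes T :: "('n::finite \<Rightarrow> 'n) \<Rightarrow> ('m::finite \<Rightarrow> 'm) \<Rightarrow> 'a \<Rightarrow> 'a"
  assumes T: "\<And>\<pi> \<tau>. \<pi> permutes (UNIV::'n set) \<Longrightarrow> \<tau> permutes (UNIV::'m set) \<Longrightarrow> T \<pi> \<tau> \<in> M \<rightarrow>\<^sub>M M \<and> distr M M (T \<pi> \<tau>) = M"
    and f: "integrable M (f::'a \<Rightarrow> real)"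
  shows "integrable M (\<lambda>\<omega>. (\<Sum>\<pi>\<in>{\<pi>. \<pi> permutes (UNIV::'n set)}. \<Sum>\<tau>\<in>{\<tau>. \<tau> permutes (UNIV::'m set)}. f (T \<pi> \<tau> \<omega>)) / (fact CARD('n) * fact CARD('m)))"
    and "integral\<^sup>L M (\<lambda>\<omega>. (\<Sum>\<pi>\<in>{\<pi>. \<pi> permutes (UNIV::'n set)}. \<Sum>\<tau>\<in>{\<tau>. \<tau> permutes (UNIV::'m set)}. f (T \<pi> \<tau> \<omega>)) / (fact CARD('n) * fact CARD('m))) = integral\<^sup>L M f"
proof -
  have fm: "f \<in> borel_measurable M" using f by auto
  have each: "integrable M (\<lambda>\<omega>. f (T \<pi> \<tau> \<omega>)) \<and> integral\<^sup>L M (\<lambda>\<omega>. f (T \<pi> \<tau> \<omega>)) = integral\<^sup>L M f"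
    if "\<pi> permutes (UNIV::'n set)" "\<tau> permutes (UNIV::'m set)" for \<pi> \<tau>
  proof -
    have Tm: "T \<pi> \<tau> \<in> M \<rightarrow>\<^sub>M M" and D: "distr M M (T \<pi> \<tau>) = M" using T[OF that] by auto
    show ?thesis
      using integrable_distr_eq[OF Tm fm] integral_distr[OF Tm fm] D f by simp
  qed
  have isum: "integrable M (\<lambda>\<omega>. \<Sum>\<pi>\<in>{\<pi>. \<pi> permutes (UNIV::'n set)}. \<Sum>\<tau>\<in>{\<tau>. \<tau> permutes (UNIV::'m set)}. f (T \<pi> \<tau> \<omega>))"
    apply (rule Bochner_Integration.integrable_sum[where f="\<lambda>\<pi> \<omega>. \<Sum>\<tau>\<in>{\<tau>. \<tau> permutes (UNIV::'m set)}. f (T \<pi> \<tau> \<omega>)"])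
    apply (rule Bochner_Integration.integrable_sum[where f="\<lambda>\<tau> \<omega>. f (T _ \<tau> \<omega>)"])
    using each by auto
  then show "integrable M (\<lambda>\<omega>. (\<Sum>\<pi>\<in>{\<pi>. \<pi> permutes (UNIV::'n set)}. \<Sum>\<tau>\<in>{\<tau>. \<tau> permutes (UNIV::'m set)}. f (T \<pi> \<tau> \<omega>)) / (fact CARD('n) * fact CARD('m)))"
    by auto
  have "integral\<^sup>L M (\<lambda>\<omega>. \<Sum>\<pi>\<in>{\<pi>. \<pi> permutes (UNIV::'n set)}. \<Sum>\<tau>\<in>{\<tau>. \<tau> permutes (UNIV::'m set)}. f (T \<pi> \<tau> \<omega>))
      = (\<Sum>\<pi>\<in>{\<pi>. \<pi> permutes (UNIV::'n set)}. \<Sum>\<tau>\<in>{\<tau>. \<tau> permutes (UNIV::'m set)}. integral\<^sup>L M f)"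
    apply (subst Bochner_Integration.integral_sum[where f="\<lambda>\<pi> \<omega>. \<Sum>\<tau>\<in>{\<tau>. \<tau> permutes (UNIV::'m set)}. f (T \<pi> \<tau> \<omega>)"])
     apply (rule Bochner_Integration.integrable_sum[where f="\<lambda>\<tau> \<omega>. f (T _ \<tau> \<omega>)"])
    using each apply auto[1]
    apply (rule sum.cong[OF refl])
    apply (subst Bochner_Integration.integral_sum[where f="\<lambda>\<tau> \<omega>. f (T _ \<tau> \<omega>)"])
    using each by auto
  also have "\<dots> = (fact CARD('n) * fact CARD('m)) * integral\<^sup>L M f"
    by (simp add: card_permutations)
  finally show "integral\<^sup>L M (\<lambda>\<omega>. (\<Sum>\<pi>\<in>{\<pi>. \<pi> permutes (UNIV::'n set)}. \<Sum>\<tau>\<in>{\<tau>. \<tau> permutes (UNIV::'m set)}. f (T \<pi> \<tau> \<omega>)) / (fact CARD('n) * fact CARD('m))) = integral\<^sup>L M f"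
    by simp
qed

theorem theorem2:
  fixes g :: "('n::finite \<Rightarrow> 'm::finite \<Rightarrow> real) \<Rightarrow> ('n \<Rightarrow> 'x) \<Rightarrow> ('m \<Rightarrow> 'y) \<Rightarrow> 'n \<Rightarrow> 'm \<Rightarrow> real"
    and p :: "('n \<Rightarrow> 'm \<Rightarrow> real) \<Rightarrow> ('n \<Rightarrow> 'x) \<Rightarrow> ('m \<Rightarrow> 'y) \<Rightarrow> 'n \<Rightarrow> real"
    and V :: "real set"
    and M :: "(('n \<Rightarrow> 'm \<Rightarrow> real) \<times> ('n \<Rightarrow> 'x) \<times> ('m \<Rightarrow> 'y)) measure"
  assumes V_nonneg: "V \<subseteq> {0..}"
    and prob: "prob_space M"
    and valued: "\<forall>(v, x, y) \<in> space M. v \<in> Vmat V"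
    and bidder_sym: "\<And>\<pi>. \<pi> permutes (UNIV::'n set) \<Longrightarrow>
        (\<lambda>(v, x, y). (rowperm \<pi> v, rowperm \<pi> x, y)) \<in> M \<rightarrow>\<^sub>M M
        \<and> distr M M (\<lambda>(v, x, y). (rowperm \<pi> v, rowperm \<pi> x, y)) = M"
    and item_sym: "\<And>\<tau>. \<tau> permutes (UNIV::'m set) \<Longrightarrow>
        (\<lambda>(v, x, y). (colperm \<tau> v, x, (\<lambda>j. y (\<tau> j)))) \<in> M \<rightarrow>\<^sub>M M
        \<and> distr M M (\<lambda>(v, x, y). (colperm \<tau> v, x, (\<lambda>j. y (\<tau> j)))) = M"
    and attained: "\<And>v x y i. (v, x, y) \<in> space M \<Longrightarrow>
        \<exists>b \<in> Vvec V. \<forall>b' \<in> Vvec V. util g p (v i) (v(i := b')) x y i \<le> util g p (v i) (v(i := b)) x y i"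
    and attained_Q3: "\<And>v x y i. (v, x, y) \<in> space M \<Longrightarrow>
        \<exists>b \<in> Vvec V. \<forall>b' \<in> Vvec V. util (Q3g g) (Q3p p) (v i) (v(i := b')) x y i
                                   \<le> util (Q3g g) (Q3p p) (v i) (v(i := b)) x y i"
    and int_p: "\<And>i. integrable M (\<lambda>(v, x, y). p v x y i)"
    and int_Q3p: "\<And>i. integrable M (\<lambda>(v, x, y). Q3p p v x y i)"
    and int_gv: "\<And>i j. integrable M (\<lambda>(v, x, y). g v x y i j * v i j)"
    and int_Q3gv: "\<And>i j. integrable M (\<lambda>(v, x, y). Q3g g v x y i j * v i j)"
    and int_reg: "\<And>i. integrable M (\<lambda>(v, x, y). regret V g p v x y i)"
    and int_Q3reg: "\<And>i. integrable M (\<lambda>(v, x, y). regret V (Q3g g) (Q3p p) v x y i)"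
    and int_Delta: "integrable M (\<lambda>(v, x, y). Delta3 V g p v x y)"
  shows "(\<integral>(v, x, y). (\<Sum>i\<in>UNIV. Q3p p v x y i) \<partial>M) = (\<integral>(v, x, y). (\<Sum>i\<in>UNIV. p v x y i) \<partial>M)
    \<and> (\<integral>(v, x, y). (\<Sum>i\<in>UNIV. regret V g p v x y i) \<partial>M)
        - (\<integral>(v, x, y). (\<Sum>i\<in>UNIV. regret V (Q3g g) (Q3p p) v x y i) \<partial>M)
      = (\<integral>(v, x, y). Delta3 V g p v x y \<partial>M)
    \<and> (\<integral>(v, x, y). Delta3 V g p v x y \<partial>M) \<ge> 0"
proof -
  interpret P: prob_space M by (rule prob)
  define T :: "('n \<Rightarrow> 'n) \<Rightarrow> ('m \<Rightarrow> 'm) \<Rightarrow> ('n \<Rightarrow> 'm \<Rightarrow> real) \<times> ('n \<Rightarrow> 'x) \<times> ('m \<Rightarrow> 'y) \<Rightarrow> ('n \<Rightarrow> 'm \<Rightarrow> real) \<times> ('n \<Rightarrow> 'x) \<times> ('m \<Rightarrow> 'y)"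
    where "T \<pi> \<tau> = (\<lambda>(v, x, y). (colperm \<tau> (rowperm \<pi> v), rowperm \<pi> x, (\<lambda>j. y (\<tau> j))))" for \<pi> \<tau>
  define c :: real where "c = fact CARD('n) * fact CARD('m)"
  have Tprop: "T \<pi> \<tau> \<in> M \<rightarrow>\<^sub>M M \<and> distr M M (T \<pi> \<tau>) = M"
    if "\<pi> permutes (UNIV::'n set)" "\<tau> permutes (UNIV::'m set)" for \<pi> \<tau>
  proof -
    define A where "A = (\<lambda>(v::'n \<Rightarrow> 'm \<Rightarrow> real, x::'n \<Rightarrow> 'x, y::'m \<Rightarrow> 'y). (rowperm \<pi> v, rowperm \<pi> x, y))"
    define B where "B = (\<lambda>(v::'n \<Rightarrow> 'm \<Rightarrow> real, x::'n \<Rightarrow> 'x, y::'m \<Rightarrow> 'y). (colperm \<tau> v, x, (\<lambda>j. y (\<tau> j))))"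
    have A: "A \<in> M \<rightarrow>\<^sub>M M" "distr M M A = M" using bidder_sym[OF that(1)] unfolding A_def by auto
    have B: "B \<in> M \<rightarrow>\<^sub>M M" "distr M M B = M" using item_sym[OF that(2)] unfolding B_def by auto
    have TBA: "T \<pi> \<tau> = B \<circ> A" unfolding T_def A_def B_def by (auto simp: fun_eq_iff)
    show ?thesis unfolding TBA
      using distr_distr[OF B(1) A(1)] A B by (simp add: measurable_comp)
  qed
  have Tspace: "T \<pi> \<tau> \<omega> \<in> space M" if "\<pi> permutes (UNIV::'n set)" "\<tau> permutes (UNIV::'m set)" "\<omega> \<in> space M" for \<pi> \<tau> \<omega>
    using Tprop[OF that(1,2)] that(3) by (meson measurable_space)
  define Pf where "Pf = (\<lambda>(v::'n \<Rightarrow> 'm \<Rightarrow> real, x::'n \<Rightarrow> 'x, y::'m \<Rightarrow> 'y). \<Sum>i\<in>UNIV. p v x y i)"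
  define Uf where "Uf = (\<lambda>(v::'n \<Rightarrow> 'm \<Rightarrow> real, x::'n \<Rightarrow> 'x, y::'m \<Rightarrow> 'y). \<Sum>i\<in>UNIV. util g p (v i) v x y i)"
  define UQf where "UQf = (\<lambda>(v::'n \<Rightarrow> 'm \<Rightarrow> real, x::'n \<Rightarrow> 'x, y::'m \<Rightarrow> 'y). \<Sum>i\<in>UNIV. util (Q3g g) (Q3p p) (v i) v x y i)"
  define Mf where "Mf = (\<lambda>(v::'n \<Rightarrow> 'm \<Rightarrow> real, x::'n \<Rightarrow> 'x, y::'m \<Rightarrow> 'y). \<Sum>i\<in>UNIV. SUP b\<in>Vvec V. util g p (v i) (v(i:=b)) x y i)"
  define MQf where "MQf = (\<lambda>(v::'n \<Rightarrow> 'm \<Rightarrow> real, x::'n \<Rightarrow> 'x, y::'m \<Rightarrow> 'y). \<Sum>i\<in>UNIV. SUP b\<in>Vvec V. util (Q3g g) (Q3p p) (v i) (v(i:=b)) x y i)"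
  define avg where "avg f \<omega> = (\<Sum>\<pi>\<in>{\<pi>. \<pi> permutes (UNIV::'n set)}. \<Sum>\<tau>\<in>{\<tau>. \<tau> permutes (UNIV::'m set)}. f (T \<pi> \<tau> \<omega>)) / c" for f \<omega>
  have avgI: "integrable M (avg f)" "integral\<^sup>L M (avg f) = integral\<^sup>L M f" if "integrable M f" for f
    using avg_int[of T M f, OF Tprop that] unfolding avg_def c_def by auto
  have eqQ3p: "(\<lambda>(v, x, y). \<Sum>i\<in>UNIV. Q3p p v x y i) = avg Pf"
    by (auto simp: fun_eq_iff avg_def Pf_def T_def c_def sum_Q3p)
  have eqUQ: "UQf = avg Uf"
    by (auto simp: fun_eq_iff avg_def Uf_def UQf_def T_def c_def U_Q3)
  have eqreg: "(\<lambda>(v, x, y). \<Sum>i\<in>UNIV. regret V g p v x y i) = (\<lambda>\<omega>. Mf \<omega> - Uf \<omega>)"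
    by (auto simp: fun_eq_iff Mf_def Uf_def regret_def sum_subtractf)
  have eqregQ: "(\<lambda>(v, x, y). \<Sum>i\<in>UNIV. regret V (Q3g g) (Q3p p) v x y i) = (\<lambda>\<omega>. MQf \<omega> - UQf \<omega>)"
    by (auto simp: fun_eq_iff MQf_def UQf_def regret_def sum_subtractf)
  have eqDelta: "(\<lambda>(v, x, y). Delta3 V g p v x y) \<omega> = Mf \<omega> - MQf \<omega>" if "\<omega> \<in> space M" for \<omega>
  proof -
    obtain v x y where \<omega>: "\<omega> = (v, x, y)" by (cases \<omega>) auto
    have s1: "(SUP v'\<in>Vmat V. \<Sum>i\<in>UNIV. util g p (v i) (v(i := v' i)) x y i) = (\<Sum>i\<in>UNIV. SUP b\<in>Vvec V. util g p (v i) (v(i:=b)) x y i)"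
      by (rule sep[where f="\<lambda>i b. util g p (v i) (v(i := b)) x y i"]) (use attained that \<omega> in auto)
    have s2: "(SUP v'\<in>Vmat V. \<Sum>i\<in>UNIV. util (Q3g g) (Q3p p) (v i) (v(i := v' i)) x y i) = (\<Sum>i\<in>UNIV. SUP b\<in>Vvec V. util (Q3g g) (Q3p p) (v i) (v(i:=b)) x y i)"
      by (rule sep[where f="\<lambda>i b. util (Q3g g) (Q3p p) (v i) (v(i := b)) x y i"]) (use attained_Q3 that \<omega> in auto)
    show ?thesis unfolding \<omega> Delta3_def Mf_def MQf_def using s1 s2 by simp
  qed
  have bound: "MQf \<omega> \<le> avg Mf \<omega>" if "\<omega> \<in> space M" for \<omega>
  proof -
    obtain v x y where \<omega>: "\<omega> = (v, x, y)" by (cases \<omega>) auto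
    have ne: "Vvec V \<noteq> ({}::('m \<Rightarrow> real) set)" using attained[of v x y undefined] that \<omega> by auto
    have "(\<Sum>i\<in>UNIV. SUP b\<in>Vvec V. util (Q3g g) (Q3p p) (v i) (v(i:=b)) x y i) \<le>
    (\<Sum>\<pi>\<in>{\<pi>. \<pi> permutes (UNIV::'n set)}. \<Sum>\<tau>\<in>{\<tau>. \<tau> permutes (UNIV::'m set)}.
      \<Sum>k\<in>UNIV. SUP b\<in>Vvec V. util g p (colperm \<tau> (rowperm \<pi> v) k) ((colperm \<tau> (rowperm \<pi> v))(k:=b)) (rowperm \<pi> x) (\<lambda>j. y (\<tau> j)) k)
     / (fact CARD('n) * fact CARD('m))"
    proof (rule MQ_bound[OF ne])
      fix \<pi> \<tau> k assume \<pi>: "\<pi> permutes (UNIV::'n set)" and \<tau>: "\<tau> permutes (UNIV::'m set)"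
      have "T \<pi> \<tau> \<omega> \<in> space M" by (rule Tspace[OF \<pi> \<tau> that])
      hence "(colperm \<tau> (rowperm \<pi> v), rowperm \<pi> x, (\<lambda>j. y (\<tau> j))) \<in> space M"
        unfolding \<omega> T_def by simp
      from attained[OF this, of k] obtain b0 where b0: "\<forall>b'\<in>Vvec V. util g p (colperm \<tau> (rowperm \<pi> v) k) ((colperm \<tau> (rowperm \<pi> v))(k:=b')) (rowperm \<pi> x) (\<lambda>j. y (\<tau> j)) k
          \<le> util g p (colperm \<tau> (rowperm \<pi> v) k) ((colperm \<tau> (rowperm \<pi> v))(k:=b0)) (rowperm \<pi> x) (\<lambda>j. y (\<tau> j)) k"
        by blast
      show "bdd_above ((\<lambda>b. util g p (colperm \<tau> (rowperm \<pi> v) k) ((colperm \<tau> (rowperm \<pi> v))(k:=b)) (rowperm \<pi> x) (\<lambda>j. y (\<tau> j)) k) ` Vvec V)"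
        using b0 by (intro bdd_aboveI2) auto
    qed
    thus ?thesis unfolding \<omega> MQf_def avg_def Mf_def T_def c_def by simp
  qed
  have iP: "integrable M Pf" unfolding Pf_def
    using Bochner_Integration.integrable_sum[of UNIV M "\<lambda>i (v, x, y). p v x y i"] int_p
    by (simp add: split_beta')
  have iU: "integrable M Uf"
  proof -
    have "Uf = (\<lambda>\<omega>. \<Sum>i\<in>UNIV. (\<Sum>j\<in>UNIV. (\<lambda>(v, x, y). g v x y i j * v i j) \<omega>) - (\<lambda>(v, x, y). p v x y i) \<omega>)"
      by (auto simp: Uf_def util_def fun_eq_iff)
    moreover have "integrable M (\<lambda>\<omega>. \<Sum>i\<in>UNIV. (\<Sum>j\<in>UNIV. (\<lambda>(v, x, y). g v x y i j * v i j) \<omega>) - (\<lambda>(v, x, y). p v x y i) \<omega>)"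
      using int_gv int_p by (intro Bochner_Integration.integrable_sum Bochner_Integration.integrable_diff) auto
    ultimately show ?thesis by simp
  qed
  have iUQ: "integrable M UQf"
  proof -
    have "UQf = (\<lambda>\<omega>. \<Sum>i\<in>UNIV. (\<Sum>j\<in>UNIV. (\<lambda>(v, x, y). Q3g g v x y i j * v i j) \<omega>) - (\<lambda>(v, x, y). Q3p p v x y i) \<omega>)"
      by (auto simp: UQf_def util_def fun_eq_iff)
    moreover have "integrable M (\<lambda>\<omega>. \<Sum>i\<in>UNIV. (\<Sum>j\<in>UNIV. (\<lambda>(v, x, y). Q3g g v x y i j * v i j) \<omega>) - (\<lambda>(v, x, y). Q3p p v x y i) \<omega>)"
      using int_Q3gv int_Q3p by (intro Bochner_Integration.integrable_sum Bochner_Integration.integrable_diff) auto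
    ultimately show ?thesis by simp
  qed
  have ireg: "integrable M (\<lambda>(v, x, y). \<Sum>i\<in>UNIV. regret V g p v x y i)"
    using Bochner_Integration.integrable_sum[of UNIV M "\<lambda>i (v, x, y). regret V g p v x y i"] int_reg
    by (simp add: split_beta')
  have iregQ: "integrable M (\<lambda>(v, x, y). \<Sum>i\<in>UNIV. regret V (Q3g g) (Q3p p) v x y i)"
    using Bochner_Integration.integrable_sum[of UNIV M "\<lambda>i (v, x, y). regret V (Q3g g) (Q3p p) v x y i"] int_Q3reg
    by (simp add: split_beta')
  have MfE: "Mf = (\<lambda>\<omega>. (Mf \<omega> - Uf \<omega>) + Uf \<omega>)" by simp
  have iM: "integrable M Mf"
    using ireg iU unfolding eqreg by (subst MfE) (rule Bochner_Integration.integrable_add)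
  have MQfE: "MQf = (\<lambda>\<omega>. (MQf \<omega> - UQf \<omega>) + UQf \<omega>)" by simp
  have iMQ: "integrable M MQf"
    using iregQ iUQ unfolding eqregQ by (subst MQfE) (rule Bochner_Integration.integrable_add)
  have c1: "(\<integral>(v, x, y). (\<Sum>i\<in>UNIV. Q3p p v x y i) \<partial>M) = (\<integral>(v, x, y). (\<Sum>i\<in>UNIV. p v x y i) \<partial>M)"
    using avgI(2)[OF iP] unfolding eqQ3p Pf_def .
  have EUQ: "integral\<^sup>L M UQf = integral\<^sup>L M Uf" using avgI(2)[OF iU] unfolding eqUQ .
  have ED: "(\<integral>(v, x, y). Delta3 V g p v x y \<partial>M) = integral\<^sup>L M Mf - integral\<^sup>L M MQf"
  proof -
    have "(\<integral>(v, x, y). Delta3 V g p v x y \<partial>M) = (\<integral>\<omega>. Mf \<omega> - MQf \<omega> \<partial>M)"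
      by (rule Bochner_Integration.integral_cong[OF refl]) (rule eqDelta)
    also have "\<dots> = integral\<^sup>L M Mf - integral\<^sup>L M MQf"
      by (rule Bochner_Integration.integral_diff[OF iM iMQ])
    finally show ?thesis .
  qed
  have c2: "(\<integral>(v, x, y). (\<Sum>i\<in>UNIV. regret V g p v x y i) \<partial>M)
        - (\<integral>(v, x, y). (\<Sum>i\<in>UNIV. regret V (Q3g g) (Q3p p) v x y i) \<partial>M)
      = (\<integral>(v, x, y). Delta3 V g p v x y \<partial>M)"
    unfolding eqreg eqregQ ED
    using Bochner_Integration.integral_diff[OF iM iU] Bochner_Integration.integral_diff[OF iMQ iUQ] EUQ
    by simp
  have "integral\<^sup>L M MQf \<le> integral\<^sup>L M (avg Mf)"
    by (rule integral_mono[OF iMQ avgI(1)[OF iM] bound])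
  hence c3: "(\<integral>(v, x, y). Delta3 V g p v x y \<partial>M) \<ge> 0"
    unfolding ED avgI(2)[OF iM] by simp
  show ?thesis using c1 c2 c3 by blast
qed

end
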